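(* Let $\mathbf{A}\in\mathbb{R}^{(\ell m)\times(qn)}$ be a block matrix with $\ell\times q$ blocks of size $m\times n$, with distinct nonzero blocks $\mathbf{A}_1,\dots,\mathbf{A}_p$, multiplicities $\eta_k$ and location-tally matrices $\mathbf{E}_1,\dots,\mathbf{E}_p\in\mathbb{R}^{\ell\times q}$. Let $\mathbf{B}=\mathbf{S}_{\ell,m}\mathbf{A}\mathbf{S}_{q,n}^\top$ and let $\mathscr{B}\subseteq\mathbb{R}^{\ell\times q}$ be the span of the blocks of $\mathbf{B}$. Define $\mathtt{mat}_{\mathscr{E}}:\mathbb{R}^p\to\mathbb{R}^{\ell\times q}$ by $\mathtt{mat}_{\mathscr{E}}(\mathbf{v})=\sum_{k=1}^p v_k\mathbf{E}_k$, and define $\mathtt{vec}_{\mathscr{E}}$ on $\mathrm{span}\{\mathbf{E}_1,\dots,\mathbf{E}_p\}$ by $\mathtt{vec}_{\mathscr{E}}\bigl(\sum_k c_k\mathbf{E}_k\bigr)=(c_1,\dots,c_p)^\top$. Let $\mathbf{A}_{(2)}\in\mathbb{R}^{p\times mn}$ be the matrix whose $k$th row is $\mathrm{vec}(\sqrt{\eta_k}\mathbf{A}_k)^\top$. Then $\mathscr{B}\subseteq\mathrm{span}\{\mathbf{E}_k\}$, and $\mathtt{vec}_{\mathscr{E}}$ restricted to $\mathscr{B}$ is a linear bijection from $\mathscr{B}$ onto the column space of $\mathbf{A}_{(2)}$, with inverse the restriction of $\mathtt{mat}_{\mathscr{E}}$. In particular $\mathscr{B}$ is isomorphic to $\ma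thrm{colspace}(\mathbf{A}_{(2)})$.
   Context: Blocks of $\mathbf{A}$: $\mathbf{A}^{(\gamma,\delta)}_{\alpha\beta}=\mathbf{A}_{(\gamma-1)m+\alpha,(\delta-1)n+\beta}$, $(\gamma,\delta)\in[\ell]\times[q]$. $\eta_k$ is the number of block positions with $\mathbf{A}^{(\gamma,\delta)}=\mathbf{A}_k$, and $[\mathbf{E}_k]_{\gamma\delta}=1/\sqrt{\eta_k}$ if $\mathbf{A}^{(\gamma,\delta)}=\mathbf{A}_k$, else $0$ (the $\mathbf{E}_k$ have disjoint supports, hence are linearly independent). For $a,b\ge1$, $s=ab$, $\mathbf{S}_{a,b}\in\mathbb{R}^{s\times s}$ is the permutation matrix whose row $(i-1)a+j$ is $\mathbf{e}_{(j-1)b+i}^\top$ ($i\in[b]$, $j\in[a]$). $\mathbf{B}\in\mathbb{R}^{(m\ell)\times(nq)}$ is viewed as an $m\times n$ grid of $\ell\times q$ blocks $\mathbf{B}^{(\alpha,\beta)}$ with $\mathbf{B}^{(\alpha,\beta)}_{\gamma\delta}=\mathbf{B}_{(\alpha-1)\ell+\gamma,(\beta-1)q+\delta}$. $\mathbf{A}_{(2)}$ is the mode-2 unfolding of the tensor $\mathcal{A}\in\mathbb{R}^{m\times p\times n}$ with $\mathcal{A}_{ikj}=\sqrt{\eta_k}[\mathbf{A}_k]_{ij}$. *)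

theory Defs
  imports "Jordan_Normal_Form.VS_Connect"
begin

text \<open>All indices are 0-based.  Matrices are Jordan_Normal_Form matrices over real.\<close>

definition blk :: "nat \<Rightarrow> nat \<Rightarrow> real mat \<Rightarrow> nat \<Rightarrow> nat \<Rightarrow> real mat" where
  "blk m n A \<gamma> \<delta> = mat m n (\<lambda>(\<alpha>,\<beta>). A $$ (\<gamma>*m+\<alpha>, \<delta>*n+\<beta>))"

definition eta :: "nat \<Rightarrow> nat \<Rightarrow> nat \<Rightarrow> nat \<Rightarrow> real mat \<Rightarrow> real mat list \<Rightarrow> nat \<Rightarrow> nat" where
  "eta l q m n A As k = card {(\<gamma>,\<delta>). \<gamma> < l \<and> \<delta> < q \<and> blk m n A \<gamma> \<delta> = As ! k}"

definition Emat :: "nat \<Rightarrow> nat \<Rightarrow> nat \<Rightarrow> nat \<Rightarrow> real mat \<Rightarrow> real mat list \<Rightarrow> nat \<Rightarrow> real mat" where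
  "Emat l q m n A As k = mat l q (\<lambda>(\<gamma>,\<delta>).
      if blk m n A \<gamma> \<delta> = As ! k then 1 / sqrt (real (eta l q m n A As k)) else 0)"

text \<open>Permutation matrix S_{a,b}: (1-based) row (i-1)a+j is e_{(j-1)b+i}; 0-based row r = i*a+j
  (i<b, j<a) has its 1 in column j*b+i, where i = r div a, j = r mod a.\<close>
definition Sperm :: "nat \<Rightarrow> nat \<Rightarrow> real mat" where
  "Sperm a b = mat (a*b) (a*b) (\<lambda>(r,c). if c = (r mod a) * b + r div a then 1 else 0)"

definition Bmat :: "nat \<Rightarrow> nat \<Rightarrow> nat \<Rightarrow> nat \<Rightarrow> real mat \<Rightarrow> real mat" where
  "Bmat l q m n A = Sperm l m * A * transpose_mat (Sperm q n)"

definition Bblk :: "nat \<Rightarrow> nat \<Rightarrow> real mat \<Rightarrow> nat \<Rightarrow> nat \<Rightarrow> real mat" where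
  "Bblk l q B \<alpha> \<beta> = mat l q (\<lambda>(\<gamma>,\<delta>). B $$ (\<alpha>*l+\<gamma>, \<beta>*q+\<delta>))"

definition mspan :: "nat \<Rightarrow> nat \<Rightarrow> real mat set \<Rightarrow> real mat set" where
  "mspan l q S = LinearCombinations.module.span class_ring (module_mat TYPE(real) l q) S"

definition Bspace :: "nat \<Rightarrow> nat \<Rightarrow> nat \<Rightarrow> nat \<Rightarrow> real mat \<Rightarrow> real mat set" where
  "Bspace l q m n A = mspan l q {Bblk l q (Bmat l q m n A) \<alpha> \<beta> | \<alpha> \<beta>. \<alpha> < m \<and> \<beta> < n}"

definition matE :: "nat \<Rightarrow> nat \<Rightarrow> nat \<Rightarrow> nat \<Rightarrow> real mat \<Rightarrow> real mat list \<Rightarrow> real vec \<Rightarrow> real mat" where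
  "matE l q m n A As v = mat l q (\<lambda>(i,j). \<Sum>k<length As. v $ k * Emat l q m n A As k $$ (i,j))"

text \<open>vec_E: the coefficient vector of a matrix in span{E_k} (well defined there since the E_k
  are linearly independent).\<close>
definition vecE :: "nat \<Rightarrow> nat \<Rightarrow> nat \<Rightarrow> nat \<Rightarrow> real mat \<Rightarrow> real mat list \<Rightarrow> real mat \<Rightarrow> real vec" where
  "vecE l q m n A As X = (THE c. c \<in> carrier_vec (length As) \<and> matE l q m n A As c = X)"

text \<open>A_(2): p x mn, k-th row = vec(sqrt(eta_k) A_k)^T, vec = column stacking:
  vec(M) at index beta*m+alpha is M(alpha,beta).\<close>
definition A2 :: "nat \<Rightarrow> nat \<Rightarrow> nat \<Rightarrow> nat \<Rightarrow> real mat \<Rightarrow> real mat list \<Rightarrow> real mat" where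
  "A2 l q m n A As = mat (length As) (m*n)
     (\<lambda>(k,r). sqrt (real (eta l q m n A As k)) * (As ! k) $$ (r mod m, r div m))"

definition colspace :: "real mat \<Rightarrow> real vec set" where
  "colspace M = vec_space.col_space (dim_row M) M"

end

theory Submission
  imports Defs
begin

lemma mult_if0: "(x::real) * (if P then a else 0) = (if P then x * a else 0)"
  "(if P then 1 else 0) * (y::real) = (if P then y else 0)" by simp_all

lemma matE_carrier: "matE l q m n A As v \<in> carrier_mat l q"
  by (simp add: matE_def)

lemma matE_add:
  assumes "u \<in> carrier_vec (length As)" "v \<in> carrier_vec (length As)"
  shows "matE l q m n A As (u + v) = matE l q m n A As u + matE l q m n A As v"
  using assms by (intro eq_matI) (auto simp: matE_def sum.distrib algebra_simps)

lemma matE_smult: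
  assumes "v \<in> carrier_vec (length As)"
  shows "matE l q m n A As (c \<cdot>\<^sub>v v) = c \<cdot>\<^sub>m matE l q m n A As v"
  using assms by (intro eq_matI) (auto simp: matE_def sum_distrib_left algebra_simps)

lemma matE_zero:
  shows "matE l q m n A As (0\<^sub>v (length As)) = 0\<^sub>m l q"
  by (intro eq_matI) (auto simp: matE_def)

lemma matE_entry:
  assumes "distinct As" "\<gamma> < l" "\<delta> < q" "k < length As" "blk m n A \<gamma> \<delta> = As ! k"
  shows "matE l q m n A As v $$ (\<gamma>,\<delta>) = v $ k * (1 / sqrt (real (eta l q m n A As k)))"
  using assms by (simp add: matE_def Emat_def nth_eq_iff_index_eq mult_if0 sum.delta)

lemma matE_entry0:
  assumes "\<gamma> < l" "\<delta> < q" "blk m n A \<gamma> \<delta> \<notin> set As"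
  shows "matE l q m n A As v $$ (\<gamma>,\<delta>) = 0"
  using assms by (auto simp: matE_def Emat_def intro!: sum.neutral)

lemma eta_pos:
  assumes "{blk m n A \<gamma> \<delta> | \<gamma> \<delta>. \<gamma> < l \<and> \<delta> < q} - {0\<^sub>m m n} = set As" "k < length As"
  shows "eta l q m n A As k > 0" "\<exists>\<gamma> \<delta>. \<gamma> < l \<and> \<delta> < q \<and> blk m n A \<gamma> \<delta> = As ! k"
proof -
  have "As ! k \<in> set As" using assms(2) by simp
  then have "As ! k \<in> {blk m n A \<gamma> \<delta> | \<gamma> \<delta>. \<gamma> < l \<and> \<delta> < q}" unfolding assms(1)[symmetric] by (rule DiffD1)
  then obtain \<gamma> \<delta> where g: "\<gamma> < l" "\<delta> < q" "blk m n A \<gamma> \<delta> = As ! k" by auto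
  then show "\<exists>\<gamma> \<delta>. \<gamma> < l \<and> \<delta> < q \<and> blk m n A \<gamma> \<delta> = As ! k" by blast
  have fin: "finite {(\<gamma>,\<delta>). \<gamma> < l \<and> \<delta> < q \<and> blk m n A \<gamma> \<delta> = As ! k}"
    by (rule finite_subset[of _ "{..<l} \<times> {..<q}"]) auto
  have "(\<gamma>,\<delta>) \<in> {(\<gamma>,\<delta>). \<gamma> < l \<and> \<delta> < q \<and> blk m n A \<gamma> \<delta> = As ! k}" using g by simp
  then have "{(\<gamma>,\<delta>). \<gamma> < l \<and> \<delta> < q \<and> blk m n A \<gamma> \<delta> = As ! k} \<noteq> {}" by (intro notI) simp
  then show "eta l q m n A As k > 0" unfolding eta_def using fin by (simp only: card_gt_0_iff) simp
qed

lemma matE_inj: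
  assumes "distinct As" "{blk m n A \<gamma> \<delta> | \<gamma> \<delta>. \<gamma> < l \<and> \<delta> < q} - {0\<^sub>m m n} = set As"
    "u \<in> carrier_vec (length As)" "v \<in> carrier_vec (length As)"
    "matE l q m n A As u = matE l q m n A As v"
  shows "u = v"
proof (rule eq_vecI)
  show "dim_vec u = dim_vec v" using assms by simp
  fix k assume "k < dim_vec v"
  then have k: "k < length As" using assms by simp
  obtain \<gamma> \<delta> where g: "\<gamma> < l" "\<delta> < q" "blk m n A \<gamma> \<delta> = As ! k" using eta_pos(2)[OF assms(2) k] by blast
  have pos: "sqrt (real (eta l q m n A As k)) > 0" using eta_pos(1)[OF assms(2) k] by simp
  have "matE l q m n A As u $$ (\<gamma>,\<delta>) = matE l q m n A As v $$ (\<gamma>,\<delta>)" using assms(5) by simp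
  then have "u $ k * (1 / sqrt (real (eta l q m n A As k))) = v $ k * (1 / sqrt (real (eta l q m n A As k)))"
    by (simp only: matE_entry[OF assms(1) g(1,2) k g(3)])
  then show "u $ k = v $ k" using pos eta_pos(1)[OF assms(2) k] by simp
qed

lemma matE_unit:
  assumes "k < length As"
  shows "matE l q m n A As (unit_vec (length As) k) = Emat l q m n A As k"
proof (intro eq_matI)
  fix i j assume ij: "i < dim_row (Emat l q m n A As k)" "j < dim_col (Emat l q m n A As k)"
  have ij': "i < l" "j < q" using ij by (auto simp: Emat_def)
  then show "matE l q m n A As (unit_vec (length As) k) $$ (i,j) = Emat l q m n A As k $$ (i,j)"
    using assms by (simp add: matE_def mult_if0 sum.delta sum.delta')
qed (auto simp: matE_def Emat_def)

lemma idx_lt: "(a::nat) < x \<Longrightarrow> b < y \<Longrightarrow> a * y + b < x * y"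
proof -
  assume "a < x" "b < y"
  then have "a * y + b < a * y + y" by simp
  also have "\<dots> = (a + 1) * y" by simp
  also have "\<dots> \<le> x * y" using \<open>a < x\<close> by (intro mult_le_mono1) simp
  finally show ?thesis .
qed

lemma Sperm_idx: "(r::nat) < a * b \<Longrightarrow> (r mod a) * b + r div a < a * b"
proof -
  assume r: "r < a * b"
  then have "a > 0" by (cases a) auto
  then have "r mod a < a" by simp
  moreover have "r div a < b" using r less_mult_imp_div_less[of r b a] by (simp only: mult.commute[of a b])
  ultimately show ?thesis by (rule idx_lt)
qed

lemma Sperm_left:
  assumes "M \<in> carrier_mat (a*b) nc" "r < a*b" "c < nc"
  shows "(Sperm a b * M) $$ (r,c) = M $$ ((r mod a)*b + r div a, c)"
  using assms Sperm_idx[OF assms(2)]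
  by (simp add: Sperm_def scalar_prod_def mult_if0 sum.delta sum.delta')

lemma Sperm_right:
  assumes "M \<in> carrier_mat nr (a*b)" "r < nr" "c < a*b"
  shows "(M * transpose_mat (Sperm a b)) $$ (r,c) = M $$ (r, (c mod a)*b + c div a)"
  using assms Sperm_idx[OF assms(3)]
  by (simp add: Sperm_def scalar_prod_def mult_if0 sum.delta sum.delta')

lemma Bmat_entry:
  assumes A: "A \<in> carrier_mat (l*m) (q*n)" and "\<alpha> < m" "\<gamma> < l" "\<beta> < n" "\<delta> < q"
  shows "Bmat l q m n A $$ (\<alpha>*l+\<gamma>, \<beta>*q+\<delta>) = A $$ (\<gamma>*m+\<alpha>, \<delta>*n+\<beta>)"
proof -
  have r: "\<alpha>*l+\<gamma> < l*m" using idx_lt[of \<alpha> m \<gamma> l] assms(2,3) by (simp only: mult.commute[of l m])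
  have c: "\<beta>*q+\<delta> < q*n" using idx_lt[of \<beta> n \<delta> q] assms(4,5) by (simp only: mult.commute[of q n])
  have S1: "Sperm l m \<in> carrier_mat (l*m) (l*m)" by (simp add: Sperm_def)
  have SA: "Sperm l m * A \<in> carrier_mat (l*m) (q*n)" by (rule mult_carrier_mat[OF S1 A])
  have cm: "(\<beta>*q+\<delta>) mod q = \<delta>" "(\<beta>*q+\<delta>) div q = \<beta>" using assms(5) by simp_all
  have rm: "(\<alpha>*l+\<gamma>) mod l = \<gamma>" "(\<alpha>*l+\<gamma>) div l = \<alpha>" using assms(3) by simp_all
  have c2: "\<delta>*n+\<beta> < q*n" using idx_lt[of \<delta> q \<beta> n] assms(4,5) by simp
  have "Bmat l q m n A $$ (\<alpha>*l+\<gamma>, \<beta>*q+\<delta>) = (Sperm l m * A) $$ (\<alpha>*l+\<gamma>, \<delta>*n+\<beta>)"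
    unfolding Bmat_def Sperm_right[OF SA r c] cm ..
  also have "\<dots> = A $$ (\<gamma>*m+\<alpha>, \<delta>*n+\<beta>)"
    unfolding Sperm_left[OF A r c2] rm ..
  finally show ?thesis .
qed

lemma matE_col:
  assumes A: "A \<in> carrier_mat (l*m) (q*n)"
    and dist: "distinct As"
    and blocks: "{blk m n A \<gamma> \<delta> | \<gamma> \<delta>. \<gamma> < l \<and> \<delta> < q} - {0\<^sub>m m n} = set As"
    and ab: "\<alpha> < m" "\<beta> < n"
  shows "matE l q m n A As (col (A2 l q m n A As) (\<beta>*m+\<alpha>)) = Bblk l q (Bmat l q m n A) \<alpha> \<beta>"
proof (rule eq_matI)
  fix \<gamma> \<delta> assume "\<gamma> < dim_row (Bblk l q (Bmat l q m n A) \<alpha> \<beta>)" "\<delta> < dim_col (Bblk l q (Bmat l q m n A) \<alpha> \<beta>)"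
  then have g: "\<gamma> < l" "\<delta> < q" by (auto simp: Bblk_def)
  have j: "\<beta>*m+\<alpha> < m*n" using idx_lt[of \<beta> n \<alpha> m] ab by (simp only: mult.commute[of m n])
  have jm: "(\<beta>*m+\<alpha>) mod m = \<alpha>" "(\<beta>*m+\<alpha>) div m = \<beta>" using ab by auto
  have R: "Bblk l q (Bmat l q m n A) \<alpha> \<beta> $$ (\<gamma>,\<delta>) = blk m n A \<gamma> \<delta> $$ (\<alpha>,\<beta>)"
    using g ab Bmat_entry[OF A ab(1) g(1) ab(2) g(2)] by (simp add: Bblk_def blk_def)
  show "matE l q m n A As (col (A2 l q m n A As) (\<beta>*m+\<alpha>)) $$ (\<gamma>,\<delta>) = Bblk l q (Bmat l q m n A) \<alpha> \<beta> $$ (\<gamma>,\<delta>)"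
  proof (cases "blk m n A \<gamma> \<delta> \<in> set As")
    case True
    then obtain k where k: "k < length As" "blk m n A \<gamma> \<delta> = As ! k" by (auto simp: in_set_conv_nth)
    have pos: "eta l q m n A As k > 0" using eta_pos(1)[OF blocks k(1)] .
    have "matE l q m n A As (col (A2 l q m n A As) (\<beta>*m+\<alpha>)) $$ (\<gamma>,\<delta>)
       = col (A2 l q m n A As) (\<beta>*m+\<alpha>) $ k * (1 / sqrt (real (eta l q m n A As k)))"
      by (rule matE_entry[OF dist g k])
    also have "\<dots> = sqrt (real (eta l q m n A As k)) * (As ! k) $$ (\<alpha>, \<beta>) * (1 / sqrt (real (eta l q m n A As k)))"
      using k j jm by (simp add: A2_def)
    also have "\<dots> = (As ! k) $$ (\<alpha>, \<beta>)" using pos by simp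
    finally show ?thesis using R k by simp
  next
    case False
    have "blk m n A \<gamma> \<delta> \<in> {blk m n A \<gamma> \<delta> | \<gamma> \<delta>. \<gamma> < l \<and> \<delta> < q}" using g by blast
    then have "blk m n A \<gamma> \<delta> = 0\<^sub>m m n" using False blocks by blast
    then show ?thesis using R matE_entry0[OF g False] ab by simp
  qed
qed (auto simp: matE_def Bblk_def)

lemma submodule_mat_D:
  assumes "submodule class_ring N (module_mat TYPE(real) l q)"
  shows "N \<subseteq> carrier_mat l q" "\<And>x y. x \<in> N \<Longrightarrow> y \<in> N \<Longrightarrow> x + y \<in> N" "0\<^sub>m l q \<in> N"
    "\<And>c x. x \<in> N \<Longrightarrow> c \<cdot>\<^sub>m x \<in> N"
  using assms unfolding submodule_def by (auto simp: module_mat_simps)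

lemma submodule_vec_D:
  assumes "submodule class_ring N (module_vec TYPE(real) p)"
  shows "N \<subseteq> carrier_vec p" "\<And>x y. x \<in> N \<Longrightarrow> y \<in> N \<Longrightarrow> x + y \<in> N" "0\<^sub>v p \<in> N"
    "\<And>c x. x \<in> N \<Longrightarrow> c \<cdot>\<^sub>v x \<in> N"
  using assms unfolding submodule_def by (auto simp: module_vec_simps)

lemma module_mat_real: "module class_ring (module_mat TYPE(real) l q)"
  using matrix_vs unfolding vectorspace_def by blast

lemma module_vec_real: "module class_ring (module_vec TYPE(real) p)"
  using vec_vs unfolding vectorspace_def by blast

lemma field_real: "field (class_ring :: real ring)"
  using vec_vs unfolding vectorspace_def by blast

lemma preimage_submodule:
  fixes f :: "real vec \<Rightarrow> real mat"
  assumes add: "\<And>u v. u \<in> carrier_vec p \<Longrightarrow> v \<in> carrier_vec p \<Longrightarrow> f (u + v) = f u + f v"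
    and sm: "\<And>c v. v \<in> carrier_vec p \<Longrightarrow> f (c \<cdot>\<^sub>v v) = c \<cdot>\<^sub>m f v"
    and z: "f (0\<^sub>v p) = 0\<^sub>m l q"
    and N: "submodule class_ring N (module_mat TYPE(real) l q)"
  shows "submodule class_ring {v \<in> carrier_vec p. f v \<in> N} (module_vec TYPE(real) p)"
  unfolding submodule_def using module_vec_real[of p] submodule_mat_D[OF N] add sm z
  by (auto simp: module_vec_simps)

lemma image_submodule:
  fixes f :: "real vec \<Rightarrow> real mat"
  assumes add: "\<And>u v. u \<in> carrier_vec p \<Longrightarrow> v \<in> carrier_vec p \<Longrightarrow> f (u + v) = f u + f v"
    and sm: "\<And>c v. v \<in> carrier_vec p \<Longrightarrow> f (c \<cdot>\<^sub>v v) = c \<cdot>\<^sub>m f v"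
    and z: "f (0\<^sub>v p) = 0\<^sub>m l q"
    and car: "\<And>v. f v \<in> carrier_mat l q"
    and N: "submodule class_ring N (module_vec TYPE(real) p)"
  shows "submodule class_ring (f ` N) (module_mat TYPE(real) l q)"
proof -
  note D = submodule_vec_D[OF N]
  show ?thesis
  proof (rule submodule.intro)
    show "module class_ring (module_mat TYPE(real) l q)" by (rule module_mat_real)
    show "f ` N \<subseteq> carrier (module_mat TYPE(real) l q)" using car by (auto simp: module_mat_simps)
    show "\<zero>\<^bsub>module_mat TYPE(real) l q\<^esub> \<in> f ` N" using D z by (auto simp: module_mat_simps intro!: image_eqI[of _ _ "0\<^sub>v p"])
  next
    fix v w assume "v \<in> f ` N" "w \<in> f ` N"
    then obtain x y where "x \<in> N" "y \<in> N" "v = f x" "w = f y" by blast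
    then show "v \<oplus>\<^bsub>module_mat TYPE(real) l q\<^esub> w \<in> f ` N"
      using D add[of x y] by (force simp: module_mat_simps intro!: image_eqI[of _ _ "x + y"])
  next
    fix c v assume "c \<in> carrier (class_ring :: real ring)" "v \<in> f ` N"
    then obtain x where "x \<in> N" "v = f x" by blast
    then show "c \<odot>\<^bsub>module_mat TYPE(real) l q\<^esub> v \<in> f ` N"
      using D sm[of x c] by (force simp: module_mat_simps intro!: image_eqI[of _ _ "c \<cdot>\<^sub>v x"])
  qed
qed

theorem lemma2:
  fixes l q m n :: nat and A :: "real mat" and As :: "real mat list"
  assumes "A \<in> carrier_mat (l*m) (q*n)"
    and "distinct As"
    and "\<forall>k < length As. As ! k \<in> carrier_mat m n \<and> As ! k \<noteq> 0\<^sub>m m n"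
    and "{blk m n A \<gamma> \<delta> | \<gamma> \<delta>. \<gamma> < l \<and> \<delta> < q} - {0\<^sub>m m n} = set As"
  shows "(Bspace l q m n A \<subseteq> mspan l q (Emat l q m n A As ` {..<length As})) \<and>
         linear_map class_ring
           ((module_mat TYPE(real) l q)\<lparr>carrier := Bspace l q m n A\<rparr>)
           ((module_vec TYPE(real) (length As))\<lparr>carrier := colspace (A2 l q m n A As)\<rparr>)
           (vecE l q m n A As) \<and>
         bij_betw (vecE l q m n A As) (Bspace l q m n A) (colspace (A2 l q m n A As)) \<and>
         (\<forall>X \<in> Bspace l q m n A. matE l q m n A As (vecE l q m n A As X) = X) \<and>
         (\<forall>v \<in> colspace (A2 l q m n A As). vecE l q m n A As (matE l q m n A As v) = v) \<and>
         (\<forall>v \<in> colspace (A2 l q m n A As). matE l q m n A As v \<in> Bspace l q m n A)"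
proof -
  note A = assms(1) and dist = assms(2) and blocks = assms(4)
  define p where "p = length As"
  define f where "f = matE l q m n A As"
  define g where "g = vecE l q m n A As"
  define C where "C = set (cols (A2 l q m n A As))"
  define S where "S = {Bblk l q (Bmat l q m n A) \<alpha> \<beta> | \<alpha> \<beta>. \<alpha> < m \<and> \<beta> < n}"
  define E where "E = Emat l q m n A As ` {..<length As}"
  interpret VS: vec_space "TYPE(real)" p .
  interpret MM: vectorspace class_ring "module_mat TYPE(real) l q" by (rule matrix_vs)
  have fadd: "\<And>u v. u \<in> carrier_vec p \<Longrightarrow> v \<in> carrier_vec p \<Longrightarrow> f (u + v) = f u + f v"
    unfolding f_def p_def by (rule matE_add)
  have fsm: "\<And>c v. v \<in> carrier_vec p \<Longrightarrow> f (c \<cdot>\<^sub>v v) = c \<cdot>\<^sub>m f v"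
    unfolding f_def p_def by (rule matE_smult)
  have fz: "f (0\<^sub>v p) = 0\<^sub>m l q" unfolding f_def p_def by (rule matE_zero)
  have fcar: "\<And>v. f v \<in> carrier_mat l q" unfolding f_def by (rule matE_carrier)
  have finj: "\<And>u v. u \<in> carrier_vec p \<Longrightarrow> v \<in> carrier_vec p \<Longrightarrow> f u = f v \<Longrightarrow> u = v"
    unfolding f_def p_def using matE_inj[OF dist blocks] by blast
  have gf: "g (f v) = v" if "v \<in> carrier_vec p" for v
    unfolding g_def vecE_def
  proof (rule the_equality)
    show "v \<in> carrier_vec (length As) \<and> matE l q m n A As v = f v" using that by (simp add: p_def f_def)
    show "\<And>c. c \<in> carrier_vec (length As) \<and> matE l q m n A As c = f v \<Longrightarrow> c = v"
      using finj that by (auto simp: p_def f_def)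
  qed
  have A2car: "A2 l q m n A As \<in> carrier_mat p (m*n)" by (simp add: A2_def p_def)
  have colsp: "colspace (A2 l q m n A As) = VS.span C"
    unfolding colspace_def C_def using A2car by (simp add: vec_space.col_space_def)
  have Ccar: "C \<subseteq> carrier_vec p" unfolding C_def using A2car by (auto simp: cols_def)
  have SfC: "S = f ` C"
  proof
    show "S \<subseteq> f ` C"
    proof
      fix X assume "X \<in> S"
      then obtain \<alpha> \<beta> where ab: "\<alpha> < m" "\<beta> < n" "X = Bblk l q (Bmat l q m n A) \<alpha> \<beta>" unfolding S_def by blast
      have j: "\<beta>*m+\<alpha> < m*n" using idx_lt[of \<beta> n \<alpha> m] ab by (simp only: mult.commute[of m n])
      have "col (A2 l q m n A As) (\<beta>*m+\<alpha>) \<in> C" unfolding C_def using j A2car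
        by (auto simp: cols_def)
      then show "X \<in> f ` C" using matE_col[OF A dist blocks ab(1,2)] ab(3) unfolding f_def by force
    qed
  next
    show "f ` C \<subseteq> S"
    proof
      fix X assume "X \<in> f ` C"
      then obtain j where j: "j < m*n" "X = f (col (A2 l q m n A As) j)" unfolding C_def using A2car
        by (auto simp: cols_def)
      have m0: "m > 0" using j by (cases m) auto
      have ab: "j mod m < m" "j div m < n" using j m0 less_mult_imp_div_less[of j n m] by (auto simp only: mult.commute[of m n] mod_less_divisor)
      have "j = (j div m) * m + j mod m" by simp
      then have "X = Bblk l q (Bmat l q m n A) (j mod m) (j div m)"
        using matE_col[OF A dist blocks ab(1,2)] j unfolding f_def by metis
      then show "X \<in> S" unfolding S_def using ab by blast
    qed
  qed
  have Scar: "S \<subseteq> carrier_mat l q" using SfC fcar by auto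
  have Bsp: "Bspace l q m n A = MM.span S" unfolding Bspace_def mspan_def S_def ..
  have colsub: "colspace (A2 l q m n A As) \<subseteq> carrier_vec p"
    unfolding colsp using VS.span_is_subset2[OF Ccar] by simp
  have colsubm: "submodule class_ring (colspace (A2 l q m n A As)) (module_vec TYPE(real) p)"
    unfolding colsp using VS.span_is_submodule[OF Ccar] by simp
  have Bsubm: "submodule class_ring (Bspace l q m n A) (module_mat TYPE(real) l q)"
    unfolding Bsp using MM.span_is_submodule[of S] Scar by (simp add: module_mat_simps)
  have BfC: "Bspace l q m n A = f ` colspace (A2 l q m n A As)"
  proof
    have "S \<subseteq> f ` colspace (A2 l q m n A As)"
      unfolding SfC colsp using VS.in_own_span[OF Ccar] by auto
    then show "Bspace l q m n A \<subseteq> f ` colspace (A2 l q m n A As)"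
      unfolding Bsp by (intro MM.span_is_subset image_submodule[OF fadd fsm fz fcar colsubm])
  next
    have "C \<subseteq> {v \<in> carrier_vec p. f v \<in> Bspace l q m n A}"
      using Ccar MM.in_own_span[of S] Scar SfC unfolding Bsp by (auto simp: module_mat_simps)
    then have "VS.span C \<subseteq> {v \<in> carrier_vec p. f v \<in> Bspace l q m n A}"
      by (intro VS.span_is_subset preimage_submodule[OF fadd fsm fz Bsubm])
    then show "f ` colspace (A2 l q m n A As) \<subseteq> Bspace l q m n A" unfolding colsp by auto
  qed
  have Ecar: "E \<subseteq> carrier_mat l q" unfolding E_def by (auto simp: Emat_def)
  have Esubm: "submodule class_ring (mspan l q E) (module_mat TYPE(real) l q)"
    unfolding mspan_def using MM.span_is_submodule[of E] Ecar by (simp add: module_mat_simps)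
  have "set (unit_vecs p) \<subseteq> {v \<in> carrier_vec p. f v \<in> mspan l q E}"
  proof
    fix v :: "real vec" assume "v \<in> set (unit_vecs p)"
    then obtain k where k: "k < p" "v = unit_vec p k" by (auto simp: unit_vecs_def)
    have "f v = Emat l q m n A As k" using matE_unit[of k As] k unfolding f_def p_def by simp
    moreover have "Emat l q m n A As k \<in> mspan l q E" unfolding mspan_def
      using MM.in_own_span[of E] Ecar k unfolding E_def p_def by (auto simp: module_mat_simps)
    ultimately show "v \<in> {v \<in> carrier_vec p. f v \<in> mspan l q E}" using k by simp
  qed
  then have "VS.span (set (unit_vecs p)) \<subseteq> {v \<in> carrier_vec p. f v \<in> mspan l q E}"
    by (intro VS.span_is_subset preimage_submodule[OF fadd fsm fz Esubm])
  then have fE: "f ` carrier_vec p \<subseteq> mspan l q E" unfolding VS.span_unit_vecs_is_carrier by auto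
  have c1: "Bspace l q m n A \<subseteq> mspan l q E" using BfC colsub fE by auto
  have c4: "\<forall>X \<in> Bspace l q m n A. f (g X) = X" using BfC colsub gf by auto
  have c5: "\<forall>v \<in> colspace (A2 l q m n A As). g (f v) = v" using colsub gf by auto
  have c6: "\<forall>v \<in> colspace (A2 l q m n A As). f v \<in> Bspace l q m n A" using BfC by auto
  have c3: "bij_betw g (Bspace l q m n A) (colspace (A2 l q m n A As))"
  proof (rule bij_betw_imageI)
    show "inj_on g (Bspace l q m n A)" using c4 by (metis inj_onI)
    show "g ` Bspace l q m n A = colspace (A2 l q m n A As)" using BfC c5 by force
  qed
  have c2: "linear_map class_ring
           ((module_mat TYPE(real) l q)\<lparr>carrier := Bspace l q m n A\<rparr>)
           ((module_vec TYPE(real) p)\<lparr>carrier := colspace (A2 l q m n A As)\<rparr>) g"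
  proof -
    have V: "vectorspace class_ring ((module_mat TYPE(real) l q)\<lparr>carrier := Bspace l q m n A\<rparr>)"
      unfolding vectorspace_def using MM.submodule_is_module[OF Bsubm] field_real by simp
    have W: "vectorspace class_ring ((module_vec TYPE(real) p)\<lparr>carrier := colspace (A2 l q m n A As)\<rparr>)"
      unfolding vectorspace_def using VS.submodule_is_module[OF colsubm] field_real by simp
    have H: "g \<in> LinearCombinations.module_hom class_ring ((module_mat TYPE(real) l q)\<lparr>carrier := Bspace l q m n A\<rparr>)
           ((module_vec TYPE(real) p)\<lparr>carrier := colspace (A2 l q m n A As)\<rparr>)"
      unfolding LinearCombinations.module_hom_def
    proof (intro CollectI conjI allI impI)
      show "g \<in> carrier (module_mat TYPE(real) l q\<lparr>carrier := Bspace l q m n A\<rparr>) \<rightarrow>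
          carrier (module_vec TYPE(real) p\<lparr>carrier := colspace (A2 l q m n A As)\<rparr>)"
        using c3 by (auto simp: bij_betw_def)
    next
      fix X Y assume "X \<in> carrier (module_mat TYPE(real) l q\<lparr>carrier := Bspace l q m n A\<rparr>) \<and>
          Y \<in> carrier (module_mat TYPE(real) l q\<lparr>carrier := Bspace l q m n A\<rparr>)"
      then obtain u v where uv: "u \<in> colspace (A2 l q m n A As)" "v \<in> colspace (A2 l q m n A As)" "X = f u" "Y = f v"
        using BfC by auto
      have uvc: "u \<in> carrier_vec p" "v \<in> carrier_vec p" using uv colsub by auto
      have "g (X + Y) = g (f (u + v))" using uv uvc fadd by simp
      also have "\<dots> = u + v" using uvc gf by simp
      finally have "g (X + Y) = u + v" .
      then show "g (X \<oplus>\<^bsub>module_mat TYPE(real) l q\<lparr>carrier := Bspace l q m n A\<rparr>\<^esub> Y) =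
         g X \<oplus>\<^bsub>module_vec TYPE(real) p\<lparr>carrier := colspace (A2 l q m n A As)\<rparr>\<^esub> g Y"
        using uv uvc gf by (simp add: module_mat_simps module_vec_simps)
    next
      fix c X assume "c \<in> carrier (class_ring :: real ring) \<and>
          X \<in> carrier (module_mat TYPE(real) l q\<lparr>carrier := Bspace l q m n A\<rparr>)"
      then obtain u where uv: "u \<in> colspace (A2 l q m n A As)" "X = f u"
        using BfC by auto
      have uvc: "u \<in> carrier_vec p" using uv colsub by auto
      have "g (c \<cdot>\<^sub>m X) = g (f (c \<cdot>\<^sub>v u))" using uv uvc fsm by simp
      also have "\<dots> = c \<cdot>\<^sub>v u" using uvc gf by simp
      finally have "g (c \<cdot>\<^sub>m X) = c \<cdot>\<^sub>v u" .
      then show "g (c \<odot>\<^bsub>module_mat TYPE(real) l q\<lparr>carrier := Bspace l q m n A\<rparr>\<^esub> X) =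
         c \<odot>\<^bsub>module_vec TYPE(real) p\<lparr>carrier := colspace (A2 l q m n A As)\<rparr>\<^esub> g X"
        using uv uvc gf by (simp add: module_mat_simps module_vec_simps)
    qed
    show ?thesis unfolding linear_map_def mod_hom_def mod_hom_axioms_def
      using V W H unfolding vectorspace_def by simp
  qed
  show ?thesis using c1 c2 c3 c4 c5 c6 unfolding E_def f_def g_def p_def by simp
qed

end
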